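(* Let $(x_n)$ be generated by (HPPA). Let $\gamma>0$ be real and let ${\rm a},{\rm B},{\rm E}:\mathbb{N}\to\mathbb{N}$ be monotone functions satisfying (Q1), (Q3), (Q4) respectively. Let $\mathcal{E},\mathcal{D},\ell\in\mathbb{N}$ satisfy $\mathcal{E}\geq 1+\sum_{i=0}^{{\rm E}(0)}\|e_i\|$, $\mathcal{D}\geq\|x_0-p\|$ for some $p\in S$, and $\ell\geq\gamma$. Define $\xi(k):=\max\{{\rm a}(2(2\mathcal{D}+\mathcal{E})(k+1)-1),\ {\rm E}(2k+1)+1\}$ and $$\chi_\ell(k):=\max\{\xi(4k+3),\ {\rm B}(8(\mathcal{D}+\mathcal{E})(k+1)\ell-1)\}+1.$$ Then $\forall k\in\mathbb{N}\ \forall n\geq\chi_\ell(k)\ \big(\|x_n-J_\gamma(x_n)\|\leq\frac{1}{k+1}\big)$.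
   Context: $X$ is a real Hilbert space, $\mathsf{A}:X\to 2^X$ a maximal monotone operator with zero set $S=\{x:0\in\mathsf{A}(x)\}$, assumed nonempty. For $\beta>0$, $J_\beta:=(Id+\beta\mathsf{A})^{-1}$ is the resolvent, a single-valued nonexpansive map with fixed point set $S$. Given $(\alpha_n)\subset\,]0,1[$, $(\beta_n)\subset(0,\infty)$, $(e_n)\subset X$, $x_0\in X$, (HPPA) is the sequence $x_{n+1}:=\alpha_n x_0+(1-\alpha_n)(J_{\beta_n}(x_n)+e_n)$. (Q1): $\forall k\,\forall n\geq{\rm a}(k)\ \alpha_n\leq\frac{1}{k+1}$. (Q3): $\forall k\,\forall n\geq{\rm B}(k)\ \beta_n\geq k$. (Q4): $\forall k\,\forall n\ \sum_{i={\rm E}(k)+1}^{{\rm E}(k)+n}\|e_i\|\leq\frac{1}{k+1}$. Monotone means nondecreasing. *)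

theory Defs
  imports "HOL-Analysis.Analysis"
begin

definition monotone_op :: "('a::real_inner \<Rightarrow> 'a set) \<Rightarrow> bool" where
  "monotone_op A \<longleftrightarrow> (\<forall>x y u v. u \<in> A x \<longrightarrow> v \<in> A y \<longrightarrow> inner (x - y) (u - v) \<ge> 0)"

definition maximal_monotone :: "('a::real_inner \<Rightarrow> 'a set) \<Rightarrow> bool" where
  "maximal_monotone A \<longleftrightarrow> monotone_op A \<and>
     (\<forall>B. monotone_op B \<and> (\<forall>x. A x \<subseteq> B x) \<longrightarrow> B = A)"

definition zeros :: "('a::real_inner \<Rightarrow> 'a set) \<Rightarrow> 'a set" where
  "zeros A = {x. 0 \<in> A x}"

text \<open>Resolvent J_beta = (Id + beta A)^{-1}: J_beta(x) is the (unique, for maximal monotone A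
  and beta > 0) point y with x \<in> y + beta A(y).\<close>
definition resolvent :: "('a::real_inner \<Rightarrow> 'a set) \<Rightarrow> real \<Rightarrow> 'a \<Rightarrow> 'a" where
  "resolvent A \<beta> x = (THE y. \<exists>u \<in> A y. x = y + \<beta> *\<^sub>R u)"

end

theory Submission
  imports Defs
begin


lemma f_expand:
  fixes x h a w :: "'a::real_inner"
  shows "inner (x + t *\<^sub>R h - a) (x + t *\<^sub>R h - w) =
    inner (x - a) (x - w) + 2 * t * inner (x - (1/2) *\<^sub>R (a + w)) h + t^2 * (norm h)^2"
  unfolding power2_norm_eq_inner by (simp add: inner_diff_left inner_diff_right inner_add_left inner_add_right
      algebra_simps inner_commute power2_eq_square)

lemma f_mid:
  fixes x y a w :: "'a::real_inner"
  shows "inner ((1/2) *\<^sub>R (x + y) - a) ((1/2) *\<^sub>R (x + y) - w) =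
    (inner (x - a) (x - w) + inner (y - a) (y - w)) / 2 - (norm (x - y))^2 / 4"
  unfolding power2_norm_eq_inner by (simp add: inner_diff_left inner_diff_right inner_add_left inner_add_right
      algebra_simps inner_commute power2_eq_square; simp add: field_simps)

lemma f_ball:
  fixes x a w :: "'a::real_inner"
  shows "inner (x - a) (x - w) = (norm (x - (1/2) *\<^sub>R (a + w)))^2 - (norm ((1/2) *\<^sub>R (a - w)))^2"
  unfolding power2_norm_eq_inner by (simp add: inner_diff_left inner_diff_right inner_add_left inner_add_right
      algebra_simps inner_commute power2_eq_square)

lemma alg_lemma:
  fixes a w :: "'b \<Rightarrow> 'a::real_inner"
  assumes fin: "finite Y" and u0: "\<forall>y\<in>Y. 0 \<le> u y" and u1: "sum u Y = 1"
    and xb: "xb = (\<Sum>y\<in>Y. u y *\<^sub>R ((1/2) *\<^sub>R (a y + w y)))"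
    and eq: "\<forall>y\<in>Y. inner (xb - a y) (xb - w y) = m"
    and mon: "\<forall>y\<in>Y. \<forall>y'\<in>Y. inner (a y - a y') (w y - w y') \<le> 0"
  shows "m \<le> 0"
proof -
  define ab where "ab = (\<Sum>y\<in>Y. u y *\<^sub>R a y)"
  define wb where "wb = (\<Sum>y\<in>Y. u y *\<^sub>R w y)"
  define S where "S = (\<Sum>y\<in>Y. u y * inner (a y) (w y))"
  have xb2: "xb = (1/2) *\<^sub>R (ab + wb)"
    unfolding xb ab_def wb_def by (simp add: scaleR_sum_right scaleR_add_right sum.distrib)
  have "m = (\<Sum>y\<in>Y. u y * m)" using u1 by (simp add: sum_distrib_right[symmetric])
  also have "\<dots> = (\<Sum>y\<in>Y. u y * inner (xb - a y) (xb - w y))" using eq by simp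
  also have "\<dots> = (\<Sum>y\<in>Y. u y * (inner xb xb - inner xb (w y) - inner (a y) xb + inner (a y) (w y)))"
    by (intro sum.cong refl) (simp add: inner_diff_left inner_diff_right algebra_simps)
  also have "\<dots> = inner xb xb - inner xb wb - inner ab xb + S"
    unfolding ab_def wb_def S_def
    by (simp add: algebra_simps sum.distrib sum_subtractf inner_sum_left inner_sum_right
        sum_distrib_left[symmetric] sum_distrib_right[symmetric] u1)
  finally have m: "m = inner xb xb - inner xb wb - inner ab xb + S" .
  have dbl: "(\<Sum>y\<in>Y. \<Sum>y'\<in>Y. u y * u y' * inner (a y - a y') (w y - w y')) = 2 * S - 2 * inner ab wb"
  proof -
    have "(\<Sum>y\<in>Y. \<Sum>y'\<in>Y. u y * u y' * inner (a y - a y') (w y - w y')) =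
      (\<Sum>y\<in>Y. \<Sum>y'\<in>Y. u y * u y' * inner (a y) (w y)) - (\<Sum>y\<in>Y. \<Sum>y'\<in>Y. u y * u y' * inner (a y) (w y'))
      - (\<Sum>y\<in>Y. \<Sum>y'\<in>Y. u y * u y' * inner (a y') (w y)) + (\<Sum>y\<in>Y. \<Sum>y'\<in>Y. u y * u y' * inner (a y') (w y'))"
      by (simp add: inner_diff_left inner_diff_right algebra_simps sum.distrib sum_subtractf)
    also have "(\<Sum>y\<in>Y. \<Sum>y'\<in>Y. u y * u y' * inner (a y) (w y)) = S"
      unfolding S_def by (simp add: sum_distrib_left[symmetric] sum_distrib_right[symmetric] u1 mult.commute mult.left_commute)
    also have "(\<Sum>y\<in>Y. \<Sum>y'\<in>Y. u y * u y' * inner (a y') (w y')) = S"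
      unfolding S_def by (simp add: sum_distrib_left[symmetric] mult.assoc) (simp add: sum_distrib_right[symmetric] u1)
    also have "(\<Sum>y\<in>Y. \<Sum>y'\<in>Y. u y * u y' * inner (a y) (w y')) = inner ab wb"
      unfolding ab_def wb_def
      apply (simp add: inner_sum_left inner_sum_right sum_distrib_left algebra_simps inner_commute)
      apply (subst sum.swap)
      apply (simp add: algebra_simps)
      done
    also have "(\<Sum>y\<in>Y. \<Sum>y'\<in>Y. u y * u y' * inner (a y') (w y)) = inner ab wb"
      unfolding ab_def wb_def
      by (simp add: inner_sum_left inner_sum_right sum_distrib_left algebra_simps inner_commute)
    finally show ?thesis by simp
  qed
  have "(\<Sum>y\<in>Y. \<Sum>y'\<in>Y. u y * u y' * inner (a y - a y') (w y - w y')) \<le> 0"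
    by (intro sum_nonpos) (use u0 mon in \<open>simp add: mult_nonneg_nonpos\<close>)
  hence S: "S \<le> inner ab wb" using dbl by simp
  have "inner xb xb - inner xb wb - inner ab xb + inner ab wb = - ((norm ((1/2) *\<^sub>R (ab - wb)))^2)"
    unfolding xb2 power2_norm_eq_inner by (simp add:  inner_diff_left inner_diff_right inner_add_left inner_add_right
      algebra_simps inner_commute)
  moreover have "(norm ((1/2) *\<^sub>R (ab - wb)))^2 \<ge> 0" by simp
  ultimately show ?thesis using m S by linarith
qed



lemma continuous_on_Max_finite:
  fixes f :: "'b \<Rightarrow> 'a::topological_space \<Rightarrow> real"
  assumes "finite F" "F \<noteq> {}" "\<And>p. p \<in> F \<Longrightarrow> continuous_on S (f p)"
  shows "continuous_on S (\<lambda>x. Max ((\<lambda>p. f p x) ` F))"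
  using assms
proof (induction F rule: finite_ne_induct)
  case (singleton y) then show ?case by simp
next
  case (insert y F)
  have "(\<lambda>x. Max ((\<lambda>p. f p x) ` insert y F)) = (\<lambda>x. max (f y x) (Max ((\<lambda>p. f p x) ` F)))"
    using insert by (simp add: Max_insert)
  then show ?case using insert by (simp add: continuous_on_max)
qed

lemma fin_lemma:
  fixes F :: "('a::real_inner \<times> 'a) set"
  assumes fin: "finite F"
    and mon: "\<forall>p\<in>F. \<forall>q\<in>F. inner (fst p - fst q) (snd p - snd q) \<le> 0"
  shows "\<exists>x. \<forall>p\<in>F. inner (x - fst p) (x - snd p) \<le> 0"
proof (cases "F = {}")
  case True then show ?thesis by simp
next
  case Fne: False
  define c where "c p = (1/2) *\<^sub>R (fst p + snd p)" for p :: "'a \<times> 'a"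
  define f where "f p x = inner (x - fst p) (x - snd p)" for p :: "'a \<times> 'a" and x
  define g where "g x = Max ((\<lambda>p. f p x) ` F)" for x
  have fcont: "continuous_on S (f p)" for p S
    unfolding f_def by (intro continuous_intros)
  have gcont: "continuous_on S g" for S
    unfolding g_def using fin Fne fcont by (rule continuous_on_Max_finite)
  define C where "C = convex hull (c ` F)"
  have Ccomp: "compact C" unfolding C_def using fin by (simp add: finite_imp_compact_convex_hull)
  have Cne: "C \<noteq> {}" unfolding C_def using Fne by simp
  have Cconv: "convex C" unfolding C_def by simp
  obtain xb where xbC: "xb \<in> C" and xbmin: "\<forall>y\<in>C. g xb \<le> g y"
    using continuous_attains_inf[OF Ccomp Cne gcont] by blast
  define m where "m = g xb"
  have fle: "f p xb \<le> m" if "p \<in> F" for p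
    unfolding m_def g_def using fin that by (intro Max_ge) auto
  define I where "I = {p\<in>F. f p xb = m}"
  have Ine: "I \<noteq> {}"
  proof -
    have "m \<in> (\<lambda>p. f p xb) ` F" unfolding m_def g_def using fin Fne by (intro Max_in) auto
    then show ?thesis unfolding I_def by auto
  qed
  have Ifin: "finite I" unfolding I_def using fin by simp
  have IF: "I \<subseteq> F" unfolding I_def by auto
  define D where "D = convex hull (c ` I)"
  have Dcomp: "compact D" unfolding D_def using Ifin by (simp add: finite_imp_compact_convex_hull)
  have Dne: "D \<noteq> {}" unfolding D_def using Ine by simp
  have Dconv: "convex D" unfolding D_def by simp
  have DC: "D \<subseteq> C" unfolding D_def C_def using IF by (intro hull_mono image_mono)
  obtain p0 where p0D: "p0 \<in> D" and p0min: "\<forall>y\<in>D. dist xb p0 \<le> dist xb y"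
    using continuous_attains_inf[OF Dcomp Dne, of "\<lambda>y. dist xb y"] continuous_on_dist[OF continuous_on_const continuous_on_id] by auto
  have xbD: "xb \<in> D"
  proof (rule ccontr)
    assume "xb \<notin> D"
    hence hne: "p0 \<noteq> xb" using p0D by auto
    define h where "h = p0 - xb"
    have hpos: "(norm h)^2 > 0" unfolding h_def using hne by simp
    have dotD: "inner (q - xb) h \<ge> (norm h)^2" if "q \<in> D" for q
    proof -
      have "inner (xb - p0) (q - p0) \<le> 0"
        using any_closest_point_dot[OF Dconv compact_imp_closed[OF Dcomp] p0D that] p0min by blast
      moreover have "inner (q - xb) h = - inner (xb - p0) (q - p0) + (norm h)^2"
        unfolding h_def power2_norm_eq_inner
        by (simp add: inner_diff_left inner_diff_right algebra_simps inner_commute)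
      ultimately show ?thesis by linarith
    qed
    have evt01: "\<forall>\<^sub>F t in at_right (0::real). 0 < t \<and> t < 1"
      unfolding eventually_at_right[OF zero_less_one] by (auto intro!: exI[of _ 1])
    have ev: "\<forall>\<^sub>F t in at_right (0::real). f p (xb + t *\<^sub>R h) < m" if pF: "p \<in> F" for p
    proof (cases "p \<in> I")
      case True
      have cD: "c p \<in> D" unfolding D_def using True by (intro hull_inc) auto
      have fpm: "f p xb = m" using True unfolding I_def by auto
      from evt01 show ?thesis
      proof (rule eventually_mono)
        fix t :: real assume t: "0 < t \<and> t < 1"
        have "f p (xb + t *\<^sub>R h) = f p xb + 2 * t * inner (xb - c p) h + t^2 * (norm h)^2"
          unfolding f_def c_def by (rule f_expand)
        also have "inner (xb - c p) h = - inner (c p - xb) h"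
          by (simp add: inner_diff_left)
        finally have eq: "f p (xb + t *\<^sub>R h) = m - 2 * t * inner (c p - xb) h + t^2 * (norm h)^2"
          using fpm by simp
        have "2 * t * inner (c p - xb) h \<ge> 2 * t * (norm h)^2"
          using dotD[OF cD] t by (intro mult_left_mono) auto
        moreover have "t^2 * (norm h)^2 < 2 * t * (norm h)^2"
        proof -
          have l1: "t * (norm h)^2 < 2 * (norm h)^2"
            by (rule mult_strict_right_mono) (use t hpos in auto)
          have "t^2 * (norm h)^2 = t * (t * (norm h)^2)" by (simp add: power2_eq_square)
          also have "\<dots> < t * (2 * (norm h)^2)" using l1 t by (intro mult_strict_left_mono) auto
          finally show ?thesis by simp
        qed
        ultimately show "f p (xb + t *\<^sub>R h) < m" using eq by linarith
      qed
    next
      case False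
      have lt: "f p xb < m" using False pF fle[OF pF] unfolding I_def by auto
      have "((\<lambda>t. f p (xb + t *\<^sub>R h)) \<longlongrightarrow> f p (xb + 0 *\<^sub>R h)) (at_right 0)"
        unfolding f_def by (intro tendsto_intros)
      then show ?thesis using lt by (auto dest: order_tendstoD(2))
    qed
    have "\<forall>\<^sub>F t in at_right (0::real). (\<forall>p\<in>F. f p (xb + t *\<^sub>R h) < m) \<and> 0 < t \<and> t < 1"
    proof (intro eventually_conj)
      show "\<forall>\<^sub>F t in at_right (0::real). \<forall>p\<in>F. f p (xb + t *\<^sub>R h) < m"
        using ev by (intro eventually_ball_finite[OF fin]) blast
    qed (use evt01 in \<open>auto elim: eventually_mono\<close>)
    then have "\<exists>t. (\<forall>p\<in>F. f p (xb + t *\<^sub>R h) < m) \<and> 0 < t \<and> t < 1"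
      by (rule eventually_happens'[OF trivial_limit_at_right_real])
    then obtain t where t: "\<forall>p\<in>F. f p (xb + t *\<^sub>R h) < m" "0 < t" "t < 1"
      by blast
    have "xb + t *\<^sub>R h = (1 - t) *\<^sub>R xb + t *\<^sub>R p0"
      unfolding h_def by (simp add: algebra_simps)
    also have "\<dots> \<in> C" using Cconv xbC DC p0D t by (intro convexD) auto
    finally have inC: "xb + t *\<^sub>R h \<in> C" .
    have "g (xb + t *\<^sub>R h) < m"
      unfolding g_def using fin Fne t(1) by (subst Max_less_iff) auto
    then show False using xbmin inC unfolding m_def by force
  qed
  obtain u where u0: "\<forall>y\<in>c ` I. 0 \<le> u y" and u1: "sum u (c ` I) = 1"
    and us: "(\<Sum>y\<in>c ` I. u y *\<^sub>R y) = xb"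
    using xbD unfolding D_def convex_hull_finite[OF finite_imageI[OF Ifin]] by blast
  define \<pi> where "\<pi> y = (SOME p. p \<in> I \<and> c p = y)" for y
  have \<pi>: "\<pi> y \<in> I \<and> c (\<pi> y) = y" if "y \<in> c ` I" for y
  proof -
    have "\<exists>p. p \<in> I \<and> c p = y" using that by blast
    then show ?thesis unfolding \<pi>_def by (rule someI_ex)
  qed
  have "m \<le> 0"
  proof (rule alg_lemma[where Y = "c ` I" and u = u and a = "\<lambda>y. fst (\<pi> y)" and w = "\<lambda>y. snd (\<pi> y)" and xb = xb])
    show "finite (c ` I)" using Ifin by simp
    show "\<forall>y\<in>c ` I. 0 \<le> u y" by fact
    show "sum u (c ` I) = 1" by fact
    show "xb = (\<Sum>y\<in>c ` I. u y *\<^sub>R ((1/2) *\<^sub>R (fst (\<pi> y) + snd (\<pi> y))))"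
      unfolding us[symmetric] by (intro sum.cong refl) (use \<pi> in \<open>auto simp: c_def\<close>)
    show "\<forall>y\<in>c ` I. inner (xb - fst (\<pi> y)) (xb - snd (\<pi> y)) = m"
      using \<pi> unfolding I_def f_def by auto
    show "\<forall>y\<in>c ` I. \<forall>y'\<in>c ` I. inner (fst (\<pi> y) - fst (\<pi> y')) (snd (\<pi> y) - snd (\<pi> y')) \<le> 0"
      using \<pi> mon IF by blast
  qed
  then show ?thesis using fle unfolding f_def by (meson order_trans)
qed



lemma inf_lemma:
  fixes P :: "('a::{real_inner,complete_space} \<times> 'a) set"
  assumes mon: "\<forall>p\<in>P. \<forall>q\<in>P. inner (fst p - fst q) (snd p - snd q) \<le> 0"
  shows "\<exists>x. \<forall>p\<in>P. inner (x - fst p) (x - snd p) \<le> 0"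
proof (cases "P = {}")
  case True then show ?thesis by simp
next
  case Pne: False
  then obtain p0 where p0: "p0 \<in> P" by blast
  define f where "f p x = inner (x - fst p) (x - snd p)" for p :: "'a \<times> 'a" and x
  define K where "K F = {x. \<forall>p\<in>F. f p x \<le> 0}" for F
  define d where "d F = Inf ((\<lambda>x. (norm x)^2) ` K F)" for F
  define \<delta> where "\<delta> n = 1 / (real n + 1)" for n :: nat
  have \<delta>pos: "\<delta> n > 0" for n unfolding \<delta>_def by simp
  have \<delta>lim: "\<delta> \<longlonglongrightarrow> 0"
    using LIMSEQ_inverse_real_of_nat unfolding \<delta>_def by (simp add: inverse_eq_divide add.commute)
  have Kne: "K F \<noteq> {}" if "finite F" "F \<subseteq> P" for F
  proof -
    have "\<forall>p\<in>F. \<forall>q\<in>F. inner (fst p - fst q) (snd p - snd q) \<le> 0" using mon that by blast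
    from fin_lemma[OF that(1) this] show ?thesis unfolding K_def f_def by auto
  qed
  have Kanti: "K F' \<subseteq> K F" if "F \<subseteq> F'" for F F' unfolding K_def using that by auto
  have bdd: "bdd_below ((\<lambda>x. (norm x)^2) ` K F)" for F by (intro bdd_belowI[of _ 0]) auto
  have dlow: "d F \<le> (norm x)^2" if "x \<in> K F" for x F
    unfolding d_def using that bdd by (intro cInf_lower) auto
  have dapprox: "\<exists>x\<in>K F. (norm x)^2 < d F + \<epsilon>" if "finite F" "F \<subseteq> P" "\<epsilon> > 0" for F \<epsilon>
  proof -
    have "Inf ((\<lambda>x. (norm x)^2) ` K F) < d F + \<epsilon>" unfolding d_def using that by simp
    then show ?thesis
      using cInf_less_iff[of "(\<lambda>x. (norm x)^2) ` K F"] Kne[OF that(1,2)] bdd by auto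
  qed
  have dmono: "d F \<le> d F'" if "F \<subseteq> F'" "finite F'" "F' \<subseteq> P" for F F'
    unfolding d_def using Kne[OF that(2,3)] Kanti[OF that(1)] bdd
    by (intro cInf_superset_mono) auto
  have mid: "(norm (x - y))^2 \<le> 2 * (norm x)^2 + 2 * (norm y)^2 - 4 * d F"
    if "x \<in> K F" "y \<in> K F" for x y F
  proof -
    have "(1/2) *\<^sub>R (x + y) \<in> K F"
      unfolding K_def
    proof (intro CollectI ballI)
      fix p assume "p \<in> F"
      then have fx: "f p x \<le> 0" and fy: "f p y \<le> 0" using that unfolding K_def by auto
      have eq: "f p ((1/2) *\<^sub>R (x + y)) = (f p x + f p y) / 2 - (norm (x - y))^2 / 4"
        unfolding f_def by (rule f_mid)
      have nn: "(norm (x - y))^2 \<ge> 0" by simp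
      have ar: "c \<le> 0" if "c = (a+b)/2 - d/4" "a \<le> 0" "b \<le> 0" "d \<ge> 0" for a b c d :: real
      proof -
        from that(1) have "c = a/2 + b/2 - d/4" by (simp add: add_divide_distrib)
        with that(2-4) show ?thesis by linarith
      qed
      show "f p ((1/2) *\<^sub>R (x + y)) \<le> 0" by (rule ar[OF eq fx fy nn])
    qed
    hence "d F \<le> (norm ((1/2) *\<^sub>R (x + y)))^2" by (rule dlow)
    moreover have "(norm (x - y))^2 + (norm (x + y))^2 = 2 * (norm x)^2 + 2 * (norm y)^2"
      unfolding power2_norm_eq_inner by (simp add: inner_diff_left inner_diff_right inner_add_left inner_add_right inner_commute)
    moreover have "(norm ((1/2) *\<^sub>R (x + y)))^2 = (norm (x + y))^2 / 4"
      by (simp add: power2_eq_square)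
    ultimately show ?thesis by linarith
  qed
  define R where "R = (norm ((1/2) *\<^sub>R (fst p0 + snd p0)) + norm ((1/2) *\<^sub>R (fst p0 - snd p0)))^2"
  have dbound: "d F \<le> R" if "finite F" "F \<subseteq> P" for F
  proof -
    have fin': "finite (insert p0 F)" "insert p0 F \<subseteq> P" using that p0 by auto
    obtain x where x: "x \<in> K (insert p0 F)" using Kne[OF fin'] by blast
    have "f p0 x \<le> 0" using x unfolding K_def by auto
    hence "(norm (x - (1/2) *\<^sub>R (fst p0 + snd p0)))^2 \<le> (norm ((1/2) *\<^sub>R (fst p0 - snd p0)))^2"
      unfolding f_def f_ball by simp
    hence "norm (x - (1/2) *\<^sub>R (fst p0 + snd p0)) \<le> norm ((1/2) *\<^sub>R (fst p0 - snd p0))"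
      by (rule power2_le_imp_le) simp
    hence "norm x \<le> norm ((1/2) *\<^sub>R (fst p0 + snd p0)) + norm ((1/2) *\<^sub>R (fst p0 - snd p0))"
      using norm_triangle_sub[of x "(1/2) *\<^sub>R (fst p0 + snd p0)"] by linarith
    hence "(norm x)^2 \<le> R" unfolding R_def by (intro power_mono) auto
    moreover have "d F \<le> d (insert p0 F)" using fin' by (intro dmono) auto
    moreover have "d (insert p0 F) \<le> (norm x)^2" using x by (rule dlow)
    ultimately show ?thesis by linarith
  qed
  define DS where "DS = {d F | F. finite F \<and> F \<subseteq> P}"
  define Ds where "Ds = Sup DS"
  have DSne: "DS \<noteq> {}" unfolding DS_def by auto
  have DSbdd: "bdd_above DS" unfolding DS_def using dbound by (intro bdd_aboveI[of _ R]) auto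
  have dle: "d F \<le> Ds" if "finite F" "F \<subseteq> P" for F
    unfolding Ds_def using DSbdd that by (intro cSup_upper) (auto simp: DS_def)
  have "\<exists>F. finite F \<and> F \<subseteq> P \<and> d F > Ds - \<delta> n" for n
  proof -
    have "Ds - \<delta> n < Sup DS" unfolding Ds_def using \<delta>pos[of n] by simp
    then obtain v where "v \<in> DS" "Ds - \<delta> n < v" using less_cSup_iff[OF DSne DSbdd] by blast
    then show ?thesis unfolding DS_def by auto
  qed
  then obtain Fs where Fs: "\<And>n. finite (Fs n) \<and> Fs n \<subseteq> P \<and> d (Fs n) > Ds - \<delta> n" by metis
  define G where "G n = \<Union> (Fs ` {..n})" for n
  have Gfin: "finite (G n)" "G n \<subseteq> P" for n unfolding G_def using Fs by auto
  have Gmono: "G n \<subseteq> G m" if "n \<le> m" for n m unfolding G_def using that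
    by (intro Union_mono image_mono) auto
  have Gd: "d (G n) > Ds - \<delta> n" for n
  proof -
    have "Fs n \<subseteq> G n" unfolding G_def by auto
    then have "d (Fs n) \<le> d (G n)" using Gfin by (intro dmono) auto
    then show ?thesis using Fs[of n] by linarith
  qed
  have "\<exists>x\<in>K (G n). (norm x)^2 < d (G n) + \<delta> n" for n
    using dapprox[OF Gfin \<delta>pos] .
  then obtain xs where xs: "\<And>n. xs n \<in> K (G n) \<and> (norm (xs n))^2 < d (G n) + \<delta> n" by metis
  have xsb: "(norm (xs n))^2 < Ds + \<delta> n" for n using xs[of n] dle[OF Gfin] by smt
  have \<delta>anti: "\<delta> m \<le> \<delta> n" if "n \<le> m" for n m
    unfolding \<delta>_def using that by (simp add: frac_le)
  have close: "(norm (x - y))^2 \<le> 8 * \<delta> n"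
    if "x \<in> K (G n)" "y \<in> K (G n)" "(norm x)^2 < Ds + \<delta> n" "(norm y)^2 < Ds + \<delta> n" for x y n
    using mid[OF that(1,2)] Gd[of n] that(3,4) by linarith
  have xsclose: "(norm (xs n - xs m))^2 \<le> 8 * \<delta> n" if "n \<le> m" for n m
  proof -
    have "xs m \<in> K (G n)" using xs[of m] Kanti[OF Gmono[OF that]] by auto
    moreover have "(norm (xs m))^2 < Ds + \<delta> n" using xsb[of m] \<delta>anti[OF that] by linarith
    ultimately show ?thesis using close xs[of n] xsb[of n] by blast
  qed
  have sq: "norm v < e" if "(norm v)^2 \<le> 8 * \<delta> n" "8 * \<delta> n < e^2" "e > 0" for v :: 'a and e n
    using that by (smt (verit) norm_ge_zero power_mono)
  have "Cauchy xs"
  proof (rule CauchyI)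
    fix e :: real assume e: "0 < e"
    have "((\<lambda>n. 8 * \<delta> n) \<longlongrightarrow> 0) sequentially" using tendsto_mult_left_zero[OF \<delta>lim, of 8] by simp
    moreover have "(0::real) < e^2" using e by simp
    ultimately have "\<forall>\<^sub>F n in sequentially. 8 * \<delta> n < e^2" by (rule order_tendstoD(2))
    then obtain M where M: "\<And>n. n \<ge> M \<Longrightarrow> 8 * \<delta> n < e^2" unfolding eventually_sequentially by blast
    show "\<exists>M. \<forall>m\<ge>M. \<forall>n\<ge>M. norm (xs m - xs n) < e"
    proof (intro exI allI impI)
      fix m n assume mn: "M \<le> m" "M \<le> n"
      show "norm (xs m - xs n) < e"
      proof (cases "m \<le> n")
        case True show ?thesis using sq[OF xsclose[OF True] M[OF mn(1)] e] by blast
      next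
        case False
        then have "norm (xs n - xs m) < e" using sq[OF xsclose M[OF mn(2)] e] by simp
        then show ?thesis by (simp add: norm_minus_commute)
      qed
    qed
  qed
  then obtain q where q: "xs \<longlonglongrightarrow> q" using Cauchy_convergent_iff convergent_def by blast
  have "\<forall>p\<in>P. f p q \<le> 0"
  proof
    fix p assume pP: "p \<in> P"
    have fin2: "finite (insert p (G n))" "insert p (G n) \<subseteq> P" for n using Gfin pP by auto
    have "\<exists>y\<in>K (insert p (G n)). (norm y)^2 < d (insert p (G n)) + \<delta> n" for n
      using dapprox[OF fin2 \<delta>pos] .
    then obtain ys where ys: "\<And>n. ys n \<in> K (insert p (G n)) \<and> (norm (ys n))^2 < d (insert p (G n)) + \<delta> n"
      by metis
    have ysK: "ys n \<in> K (G n)" for n using ys[of n] Kanti[of "G n" "insert p (G n)"] by auto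
    have ysb: "(norm (ys n))^2 < Ds + \<delta> n" for n using ys[of n] dle[OF fin2] by smt
    have fys: "f p (ys n) \<le> 0" for n using ys[of n] unfolding K_def by auto
    have bnd: "norm (ys n - xs n) \<le> sqrt (8 * \<delta> n)" for n
      using close[OF ysK xs[THEN conjunct1] ysb xsb] by (simp add: real_le_rsqrt)
    have "((\<lambda>n. sqrt (8 * \<delta> n)) \<longlongrightarrow> sqrt (8 * 0)) sequentially" by (intro tendsto_intros \<delta>lim)
    then have lim0: "((\<lambda>n. sqrt (8 * \<delta> n)) \<longlongrightarrow> 0) sequentially" by simp
    have "((\<lambda>n. ys n - xs n) \<longlongrightarrow> 0) sequentially"
      by (rule Lim_null_comparison[OF always_eventually[OF allI[OF bnd]] lim0])
    then have "((\<lambda>n. (ys n - xs n) + xs n) \<longlongrightarrow> 0 + q) sequentially" using q by (intro tendsto_intros)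
    then have "ys \<longlonglongrightarrow> q" by simp
    then have "(\<lambda>n. f p (ys n)) \<longlonglongrightarrow> f p q" unfolding f_def by (intro tendsto_intros)
    then show "f p q \<le> 0" using fys by (intro LIMSEQ_le_const2[of _ _ 0]) auto
  qed
  then show ?thesis unfolding f_def by blast
qed



lemma mm_mono:
  assumes "maximal_monotone A" "u \<in> A x" "v \<in> A y"
  shows "inner (x - y) (u - v) \<ge> 0"
  using assms unfolding maximal_monotone_def monotone_op_def by blast

lemma resolvent_exists:
  fixes A :: "'a::{real_inner,complete_space} \<Rightarrow> 'a set"
  assumes mm: "maximal_monotone A" and b: "b > 0"
  shows "\<exists>y. \<exists>u\<in>A y. z = y + b *\<^sub>R u"
proof -
  define P where "P = {(a, z - b *\<^sub>R v) | a v. v \<in> A a}"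
  have "\<forall>p\<in>P. \<forall>q\<in>P. inner (fst p - fst q) (snd p - snd q) \<le> 0"
  proof (intro ballI)
    fix p q assume "p \<in> P" "q \<in> P"
    then obtain a v a' v' where pq: "p = (a, z - b *\<^sub>R v)" "v \<in> A a" "q = (a', z - b *\<^sub>R v')" "v' \<in> A a'"
      unfolding P_def by blast
    have "inner (a - a') (v - v') \<ge> 0" using mm_mono[OF mm pq(2) pq(4)] .
    moreover have "inner (fst p - fst q) (snd p - snd q) = - b * inner (a - a') (v - v')"
      unfolding pq by (simp add: inner_diff_right algebra_simps)
    ultimately show "inner (fst p - fst q) (snd p - snd q) \<le> 0"
      using b by (simp add: mult_nonneg_nonneg)
  qed
  from inf_lemma[OF this] obtain y where y: "\<forall>p\<in>P. inner (y - fst p) (y - snd p) \<le> 0" by blast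
  define u where "u = (1 / b) *\<^sub>R (z - y)"
  have rel: "inner (y - a) (u - v) \<ge> 0" if "v \<in> A a" for a v
  proof -
    have "(a, z - b *\<^sub>R v) \<in> P" unfolding P_def using that by blast
    then have "inner (y - a) (y - (z - b *\<^sub>R v)) \<le> 0" using y by auto
    moreover have "inner (y - a) (u - v) = - (1 / b) * inner (y - a) (y - (z - b *\<^sub>R v))"
      unfolding u_def using b by (simp add: inner_diff_right algebra_simps)
    ultimately show ?thesis using b by (simp add: divide_nonpos_pos)
  qed
  define B where "B w = (if w = y then insert u (A y) else A w)" for w
  have monoA: "monotone_op A" using mm unfolding maximal_monotone_def by blast
  have "monotone_op B"
    unfolding monotone_op_def
  proof (intro allI impI)
    fix x1 x2 u1 u2 assume h: "u1 \<in> B x1" "u2 \<in> B x2"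
    show "inner (x1 - x2) (u1 - u2) \<ge> 0"
    proof (cases "x1 = y \<and> u1 = u")
      case c1: True
      show ?thesis
      proof (cases "x2 = y \<and> u2 = u")
        case True then show ?thesis using c1 by simp
      next
        case False
        then have "u2 \<in> A x2" using h(2) unfolding B_def by (auto split: if_splits)
        then show ?thesis using rel c1 by auto
      qed
    next
      case c1: False
      then have a1: "u1 \<in> A x1" using h(1) unfolding B_def by (auto split: if_splits)
      show ?thesis
      proof (cases "x2 = y \<and> u2 = u")
        case True
        have "inner (y - x1) (u - u1) \<ge> 0" using rel[OF a1] .
        moreover have "inner (x1 - x2) (u1 - u2) = inner (y - x1) (u - u1)"
          using True by (simp add: inner_diff_left inner_diff_right algebra_simps)
        ultimately show ?thesis by simp
      next
        case False
        then have "u2 \<in> A x2" using h(2) unfolding B_def by (auto split: if_splits)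
        then show ?thesis using monoA a1 unfolding monotone_op_def by blast
      qed
    qed
  qed
  moreover have "\<forall>w. A w \<subseteq> B w" unfolding B_def by auto
  ultimately have "B = A" using mm unfolding maximal_monotone_def by blast
  then have "u \<in> A y" using fun_cong[of B A y] unfolding B_def by auto
  moreover have "z = y + b *\<^sub>R u" unfolding u_def using b by simp
  ultimately show ?thesis by blast
qed

lemma resolvent_char:
  fixes A :: "'a::{real_inner,complete_space} \<Rightarrow> 'a set"
  assumes mm: "maximal_monotone A" and b: "b > 0" and u: "u \<in> A y" and z: "z = y + b *\<^sub>R u"
  shows "resolvent A b z = y"
  unfolding resolvent_def
proof (rule the_equality)
  show "\<exists>u\<in>A y. z = y + b *\<^sub>R u" using u z by blast
next
  fix y' assume "\<exists>u\<in>A y'. z = y' + b *\<^sub>R u"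
  then obtain u' where u': "u' \<in> A y'" "z = y' + b *\<^sub>R u'" by blast
  have "inner (y' - y) (u' - u) \<ge> 0" using mm_mono[OF mm u'(1) u] .
  moreover have "u' - u = - (1/b) *\<^sub>R (y' - y)"
  proof -
    have "y' + b *\<^sub>R u' = y + b *\<^sub>R u" using u'(2) z by simp
    then have "b *\<^sub>R (u' - u) = - (y' - y)" by (simp add: algebra_simps)
    then have "(1/b) *\<^sub>R (b *\<^sub>R (u' - u)) = (1/b) *\<^sub>R (- (y' - y))" by simp
    then show ?thesis using b by (simp add: algebra_simps)
  qed
  ultimately have "- (1/b) * inner (y' - y) (y' - y) \<ge> 0" by simp
  then have "inner (y' - y) (y' - y) \<le> 0" using b by (simp add: divide_le_0_iff)
  then have "inner (y' - y) (y' - y) = 0" using inner_ge_zero[of "y' - y"] by linarith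
  then show "y' = y" by simp
qed

lemma resolvent_in:
  fixes A :: "'a::{real_inner,complete_space} \<Rightarrow> 'a set"
  assumes mm: "maximal_monotone A" and b: "b > 0"
  shows "\<exists>u\<in>A (resolvent A b z). z = resolvent A b z + b *\<^sub>R u"
proof -
  obtain y u where "u \<in> A y" "z = y + b *\<^sub>R u" using resolvent_exists[OF mm b] by blast
  moreover then have "resolvent A b z = y" by (intro resolvent_char[OF mm b])
  ultimately show ?thesis by metis
qed



theorem mainTheorem9:
  fixes A :: "'a::{real_inner, complete_space} \<Rightarrow> 'a set"
    and \<alpha> \<beta> :: "nat \<Rightarrow> real"
    and e x :: "nat \<Rightarrow> 'a"
    and \<gamma> :: real
    and a B E :: "nat \<Rightarrow> nat"
    and cE cD l :: nat
    and p :: 'a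
  assumes maxmon: "maximal_monotone A"
    and alpha: "\<And>n. 0 < \<alpha> n \<and> \<alpha> n < 1"
    and beta: "\<And>n. \<beta> n > 0"
    and HPPA: "\<And>n. x (Suc n) = \<alpha> n *\<^sub>R x 0 + (1 - \<alpha> n) *\<^sub>R (resolvent A (\<beta> n) (x n) + e n)"
    and gamma: "\<gamma> > 0"
    and mono_a: "mono a" and mono_B: "mono B" and mono_E: "mono E"
    and Q1: "\<forall>k. \<forall>n \<ge> a k. \<alpha> n \<le> 1 / (real k + 1)"
    and Q3: "\<forall>k. \<forall>n \<ge> B k. \<beta> n \<ge> real k"
    and Q4: "\<forall>k n. (\<Sum>i = E k + 1..E k + n. norm (e i)) \<le> 1 / (real k + 1)"
    and cE: "real cE \<ge> 1 + (\<Sum>i = 0..E 0. norm (e i))"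
    and pS: "p \<in> zeros A"
    and cD: "real cD \<ge> norm (x 0 - p)"
    and l: "real l \<ge> \<gamma>"
  shows "let xi = (\<lambda>k. max (a (2 * (2 * cD + cE) * (k + 1) - 1)) (E (2 * k + 1) + 1));
             chi = (\<lambda>k. max (xi (4 * k + 3)) (B (8 * (cD + cE) * (k + 1) * l - 1)) + 1)
         in \<forall>k. \<forall>n \<ge> chi k. norm (x n - resolvent A \<gamma> (x n)) \<le> 1 / (real k + 1)"
proof -
  define J where "J b = resolvent A b" for b
  define D where "D = real cD"
  define Ee where "Ee = real cE"
  have p0: "0 \<in> A p" using pS unfolding zeros_def by simp
  have Jp: "J b p = p" if "b > 0" for b
    unfolding J_def using resolvent_char[OF maxmon that p0, of p] by simp
  have firm: "norm (J b z - p) \<le> norm (z - p) \<and> norm (z - J b z) \<le> norm (z - p)" if b: "b > 0" for b z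
  proof -
    obtain u where u: "u \<in> A (J b z)" "z = J b z + b *\<^sub>R u"
      using resolvent_in[OF maxmon b] unfolding J_def by blast
    have ip: "inner (J b z - p) (u - 0) \<ge> 0" using mm_mono[OF maxmon u(1) p0] .
    have "(norm (z - p))^2 = (norm (J b z - p))^2 + 2 * b * inner (J b z - p) u + (norm (b *\<^sub>R u))^2"
      apply (subst u(2))
      unfolding power2_norm_eq_inner
      by (simp add: inner_diff_left inner_diff_right inner_add_left inner_add_right algebra_simps inner_commute)
    moreover have "z - J b z = b *\<^sub>R u" using u(2) by (simp add: algebra_simps)
    moreover have "2 * b * inner (J b z - p) u \<ge> 0" using ip b by simp
    ultimately have "(norm (J b z - p))^2 \<le> (norm (z - p))^2" "(norm (z - J b z))^2 \<le> (norm (z - p))^2"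
      by (simp_all add: add_nonneg_nonneg)
    then show ?thesis by (auto intro: power2_le_imp_le)
  qed
  have nonexp: "norm (J b z1 - J b z2) \<le> norm (z1 - z2)" if b: "b > 0" for b z1 z2
  proof -
    obtain u1 where u1: "u1 \<in> A (J b z1)" "z1 = J b z1 + b *\<^sub>R u1"
      using resolvent_in[OF maxmon b] unfolding J_def by blast
    obtain u2 where u2: "u2 \<in> A (J b z2)" "z2 = J b z2 + b *\<^sub>R u2"
      using resolvent_in[OF maxmon b] unfolding J_def by blast
    have ip: "inner (J b z1 - J b z2) (u1 - u2) \<ge> 0" using mm_mono[OF maxmon u1(1) u2(1)] .
    have gen: "(norm (s + b *\<^sub>R t))^2 = (norm s)^2 + 2 * b * inner s t + (norm (b *\<^sub>R t))^2" for s t :: 'a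
      unfolding power2_norm_eq_inner
      by (simp add: inner_add_left inner_add_right algebra_simps inner_commute)
    have "z1 - z2 = (J b z1 - J b z2) + b *\<^sub>R (u1 - u2)"
      using u1(2) u2(2) by (simp add: algebra_simps)
    then have "(norm (z1 - z2))^2 = (norm (J b z1 - J b z2))^2 + 2 * b * inner (J b z1 - J b z2) (u1 - u2) + (norm (b *\<^sub>R (u1 - u2)))^2"
      using gen by simp
    moreover have "2 * b * inner (J b z1 - J b z2) (u1 - u2) \<ge> 0" using ip b by simp
    ultimately have "(norm (J b z1 - J b z2))^2 \<le> (norm (z1 - z2))^2" by simp
    then show ?thesis by (auto intro: power2_le_imp_le)
  qed
  have yos: "norm (y - J b y) \<le> b * norm v" if b: "b > 0" and v: "v \<in> A y" for b y v
  proof -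
    obtain w where w: "w \<in> A (J b y)" "y = J b y + b *\<^sub>R w"
      using resolvent_in[OF maxmon b] unfolding J_def by blast
    have "inner (y - J b y) (v - w) \<ge> 0" using mm_mono[OF maxmon v w(1)] .
    moreover have "y - J b y = b *\<^sub>R w" using w(2) by (simp add: algebra_simps)
    ultimately have "b * inner w (v - w) \<ge> 0" by simp
    then have "inner w (v - w) \<ge> 0" using b by (simp add: zero_le_mult_iff)
    then have "(norm w)^2 \<le> inner w v" unfolding power2_norm_eq_inner by (simp add: inner_diff_right)
    also have "\<dots> \<le> norm w * norm v" by (rule norm_cauchy_schwarz)
    finally have h: "norm w * norm w \<le> norm w * norm v" by (simp add: power2_eq_square)
    have "norm w \<le> norm v"
    proof (cases "norm w = 0")
      case True then show ?thesis by simp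
    next
      case False then have "norm w > 0" by simp
      then show ?thesis using h by (simp add: mult_le_cancel_left_pos)
    qed
    then have "b * norm w \<le> b * norm v" using b by simp
    then show ?thesis using \<open>y - J b y = b *\<^sub>R w\<close> b by simp
  qed
  have Esum: "(\<Sum>i<m. norm (e i)) \<le> Ee" for m
  proof -
    have "(\<Sum>i<m. norm (e i)) \<le> (\<Sum>i=0..E 0 + m. norm (e i))"
      by (intro sum_mono2) auto
    also have "\<dots> = (\<Sum>i=0..E 0. norm (e i)) + (\<Sum>i=E 0 + 1..E 0 + m. norm (e i))"
      by (rule sum.ub_add_nat) simp
    also have "(\<Sum>i=E 0 + 1..E 0 + m. norm (e i)) \<le> 1" using Q4[rule_format, of 0 m] by simp
    finally show ?thesis using cE unfolding Ee_def by linarith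
  qed
  have xb0: "norm (x m - p) \<le> D + (\<Sum>i<m. norm (e i))" for m
  proof (induction m)
    case 0 then show ?case using cD unfolding D_def by simp
  next
    case (Suc m)
    let ?a = "\<alpha> m"
    have a01: "0 < ?a" "?a < 1" using alpha[of m] by auto
    have "x (Suc m) - p = ?a *\<^sub>R (x 0 - p) + (1 - ?a) *\<^sub>R ((J (\<beta> m) (x m) - p) + e m)"
      unfolding HPPA J_def by (simp add: algebra_simps)
    then have "norm (x (Suc m) - p) \<le> ?a * norm (x 0 - p) + (1 - ?a) * norm ((J (\<beta> m) (x m) - p) + e m)"
      using a01 by (metis (no_types, lifting) abs_of_nonneg less_eq_real_def norm_scaleR norm_triangle_ineq diff_ge_0_iff_ge)
    also have "\<dots> \<le> ?a * D + (1 - ?a) * (D + (\<Sum>i<m. norm (e i)) + norm (e m))"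
    proof (intro add_mono mult_left_mono)
      show "norm (x 0 - p) \<le> D" using cD unfolding D_def .
      have "norm ((J (\<beta> m) (x m) - p) + e m) \<le> norm (J (\<beta> m) (x m) - p) + norm (e m)"
        by (rule norm_triangle_ineq)
      also have "norm (J (\<beta> m) (x m) - p) \<le> norm (x m - p)" using firm[OF beta[of m]] by blast
      finally show "norm ((J (\<beta> m) (x m) - p) + e m) \<le> D + (\<Sum>i<m. norm (e i)) + norm (e m)"
        using Suc.IH by linarith
    qed (use a01 in auto)
    also have "\<dots> \<le> D + (\<Sum>i<Suc m. norm (e i))"
    proof -
      have "(1 - ?a) * ((\<Sum>i<m. norm (e i)) + norm (e m)) \<le> (\<Sum>i<m. norm (e i)) + norm (e m)"
        using a01 by (intro mult_left_le_one_le) (auto intro!: add_nonneg_nonneg sum_nonneg)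
      then show ?thesis by (simp add: algebra_simps)
    qed
    finally show ?case .
  qed
  have xb: "norm (x m - p) \<le> D + Ee" for m using xb0[of m] Esum[of m] by linarith
  have cE1: "cE \<ge> 1" using cE sum_nonneg[of "{0..E 0}" "\<lambda>i. norm (e i)"] by simp
  have l1: "l \<ge> 1" using l gamma by simp
  show ?thesis
    unfolding Let_def
  proof (intro allI impI)
    fix k n
    assume n: "max (max (a (2 * (2 * cD + cE) * (4 * k + 3 + 1) - 1)) (E (2 * (4 * k + 3) + 1) + 1))
                 (B (8 * (cD + cE) * (k + 1) * l - 1)) + 1 \<le> n"
    define m where "m = n - 1"
    define N where "N = 2 * (2 * cD + cE) * (4 * k + 3 + 1)"
    define j where "j = E (2 * (4 * k + 3) + 1)"
    define M where "M = 8 * (cD + cE) * (k + 1) * l"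
    have nm: "n = Suc m" unfolding m_def using n by simp
    have ma: "m \<ge> a (N - 1)" and mj: "m \<ge> j + 1" and mB: "m \<ge> B (M - 1)"
      using n unfolding m_def N_def j_def M_def by auto
    have N1: "N \<ge> 1" unfolding N_def using cE1 by simp
    have M1: "M \<ge> 1" unfolding M_def using cE1 l1 by simp
    have am: "\<alpha> m \<le> 1 / real N"
    proof -
      have "\<alpha> m \<le> 1 / (real (N - 1) + 1)" using Q1 ma by blast
      also have "real (N - 1) + 1 = real N" using N1 by (simp add: of_nat_diff)
      finally show ?thesis .
    qed
    have em: "norm (e m) \<le> 1 / (real (2 * (4 * k + 3) + 1) + 1)"
    proof -
      have "norm (e m) \<le> (\<Sum>i = j + 1..j + (m - j). norm (e i))"
        using mj by (intro member_le_sum) auto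
      also have "\<dots> \<le> 1 / (real (2 * (4 * k + 3) + 1) + 1)"
        using Q4[rule_format, of "2 * (4 * k + 3) + 1" "m - j"] unfolding j_def by simp
      finally show ?thesis .
    qed
    have bm: "\<beta> m \<ge> real M - 1"
    proof -
      have "\<beta> m \<ge> real (M - 1)" using Q3 mB by blast
      then show ?thesis using M1 by (simp add: of_nat_diff)
    qed
    define y where "y = J (\<beta> m) (x m)"
    obtain v where v: "v \<in> A y" "x m = y + \<beta> m *\<^sub>R v"
      using resolvent_in[OF maxmon beta[of m]] unfolding y_def J_def by blast
    have xn: "x n - y = \<alpha> m *\<^sub>R (x 0 - y) + (1 - \<alpha> m) *\<^sub>R e m"
      unfolding nm HPPA y_def J_def by (simp add: algebra_simps)
    have x0y: "norm (x 0 - y) \<le> 2 * D + Ee"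
    proof -
      have "norm (x 0 - y) \<le> norm (x 0 - p) + norm (y - p)"
        using norm_triangle_ineq4[of "x 0 - p" "y - p"] by simp
      moreover have "norm (y - p) \<le> norm (x m - p)" unfolding y_def using firm[OF beta[of m]] by blast
      ultimately show ?thesis using cD xb[of m] unfolding D_def by linarith
    qed
    have a01: "0 < \<alpha> m" "\<alpha> m < 1" using alpha[of m] by auto
    have "norm (x n - y) \<le> \<alpha> m * norm (x 0 - y) + (1 - \<alpha> m) * norm (e m)"
      unfolding xn using a01 norm_triangle_ineq[of "\<alpha> m *\<^sub>R (x 0 - y)" "(1 - \<alpha> m) *\<^sub>R e m"] by simp
    also have "\<dots> \<le> \<alpha> m * (2 * D + Ee) + norm (e m)"
    proof (intro add_mono mult_left_mono)
      show "(1 - \<alpha> m) * norm (e m) \<le> norm (e m)" using a01 by (intro mult_left_le_one_le) auto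
    qed (use a01 x0y in auto)
    finally have xn1: "norm (x n - y) \<le> \<alpha> m * (2 * D + Ee) + norm (e m)" .
    have xn2: "\<alpha> m * (2 * D + Ee) \<le> 1 / (2 * (4 * real k + 4))"
    proof -
      have pos: "2 * D + Ee > 0" using cE1 unfolding D_def Ee_def by simp
      have "\<alpha> m * (2 * D + Ee) \<le> (1 / real N) * (2 * D + Ee)"
        using am pos by (intro mult_right_mono) auto
      also have "real N = 2 * (2 * D + Ee) * (4 * real k + 4)" unfolding N_def D_def Ee_def by simp
      also have "1 / (2 * (2 * D + Ee) * (4 * real k + 4)) * (2 * D + Ee) = 1 / (2 * (4 * real k + 4))"
      proof -
        have gen: "1 / (2 * P * Q) * P = 1 / (2 * Q)" if "P > 0" "Q > 0" for P Q :: real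
          using that by (simp add: field_simps)
        show ?thesis by (rule gen) (use pos in auto)
      qed
      finally show ?thesis .
    qed
    have xn3: "norm (e m) \<le> 1 / (2 * (4 * real k + 4))"
      using em by (simp add: algebra_simps)
    have "1 / (2 * (4 * real k + 4)) + 1 / (2 * (4 * real k + 4)) = 1 / (4 * real k + 4)"
      by (simp add: field_simps)
    then have xny: "norm (x n - y) \<le> 1 / (4 * real k + 4)" using order_trans[OF xn1 add_mono[OF xn2 xn3]] by simp
    have bpos: "\<beta> m > 0" by (rule beta)
    have xmy: "norm (x m - y) \<le> D + Ee" unfolding y_def using firm[OF beta[of m]] xb[of m] by (meson order_trans)
    have nv: "\<beta> m * norm v \<le> D + Ee" using xmy v(2) bpos by simp
    define W where "W = (D + Ee) * (real k + 1)"
    have DE1: "D + Ee \<ge> 1" unfolding D_def Ee_def using cE1 by simp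
    have W1: "W \<ge> 1" unfolding W_def by (rule mult_ge1_I[OF DE1]) simp
    have lr: "real l \<ge> 1" using l1 by simp
    have MW: "real M = 8 * W * real l" unfolding M_def W_def D_def Ee_def by (simp add: algebra_simps)
    have "W * real l \<ge> 1" using W1 lr by (rule mult_ge1_I)
    then have "4 * W * real l \<ge> 1" by simp
    then have b4: "\<beta> m \<ge> 4 * W * real l" using bm MW by linarith
    have "4 * W * real l * norm v \<le> \<beta> m * norm v" using b4 by (intro mult_right_mono) auto
    also have "\<dots> \<le> D + Ee" by (rule nv)
    finally have "4 * (D + Ee) * ((real k + 1) * real l * norm v) \<le> (D + Ee) * 1"
      unfolding W_def by (simp add: algebra_simps)
    moreover have "D + Ee > 0" using cE1 unfolding D_def Ee_def by simp
    ultimately have key: "4 * ((real k + 1) * real l * norm v) \<le> 1"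
      by (metis mult.assoc mult.left_commute mult_le_cancel_left_pos)
    have "norm (y - J \<gamma> y) \<le> \<gamma> * norm v" by (rule yos[OF gamma v(1)])
    also have "\<dots> \<le> real l * norm v" using l by (intro mult_right_mono) auto
    also have "\<dots> \<le> 1 / (4 * (real k + 1))"
      using key by (simp add: field_simps)
    finally have yJ: "norm (y - J \<gamma> y) \<le> 1 / (4 * (real k + 1))" .
    have dec: "x n - J \<gamma> (x n) = ((x n - y) + (y - J \<gamma> y)) + (J \<gamma> y - J \<gamma> (x n))" by simp
    have t1: "norm (x n - J \<gamma> (x n)) \<le> norm ((x n - y) + (y - J \<gamma> y)) + norm (J \<gamma> y - J \<gamma> (x n))"
      unfolding dec by (rule norm_triangle_ineq)
    have t2: "norm ((x n - y) + (y - J \<gamma> y)) \<le> norm (x n - y) + norm (y - J \<gamma> y)"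
      by (rule norm_triangle_ineq)
    have t3: "norm (J \<gamma> y - J \<gamma> (x n)) \<le> norm (x n - y)"
      using nonexp[OF gamma, of y "x n"] by (simp add: norm_minus_commute)
    define q where "q = 1 / (4 * (real k + 1))"
    have xny': "norm (x n - y) \<le> q" using xny unfolding q_def by (simp add: algebra_simps)
    have yJ': "norm (y - J \<gamma> y) \<le> q" using yJ unfolding q_def .
    have "norm (x n - J \<gamma> (x n)) \<le> 3 * q" using t1 t2 t3 xny' yJ' by linarith
    also have "3 * q \<le> 1 / (real k + 1)" unfolding q_def by (simp add: field_simps)
    finally show "norm (x n - resolvent A \<gamma> (x n)) \<le> 1 / (real k + 1)" unfolding J_def .
  qed
qed


end
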